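(* For every positive integer $k$ there is a constant $C_k>0$ such that the following holds. Let $r\in\mathbb{C}$, let $N$ be a positive integer, let $A=\{r, r+1,\ldots, r+N-1\}$, and let $B\subset\mathbb{C}$ be a finite set with $A\subseteq B.B=\{bb':b,b'\in B\}$. Let $G$ be a containment graph of $A$ in $B.B$. If $G$ contains a cycle of length $2k$, then $r$ is an algebraic number of degree at most $k$ and height at most $C_kN^k$.
   Context: Containment graph: given $A\subseteq B.B$, the containment graph $G(A,B.B)$ is the bipartite graph whose two colour classes are two disjoint copies of $B$, obtained by choosing for each $a\in A$ one fixed representation $a=b_1b_2$ with $b_1,b_2\in B$ and placing an edge between $b_1$ in the first copy and $b_2$ in the second copy (so it has $2|B|$ vertices and $|A|$ edges). The height of an integer polynomial is the largest absolute value of its coefficients. The height of an algebraic number $\alpha$ is the height of its primitive polynomial, i.e. the integer polynomial of minimal degree, and with leading coefficient minimal in absolute value, having $\alpha$ as a root. *)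

theory Defs
  imports Complex_Main "HOL-Computational_Algebra.Polynomial"
begin

definition int_poly_height :: "int poly \<Rightarrow> int" where
  "int_poly_height p = Max {\<bar>coeff p i\<bar> | i. i \<le> degree p}"

definition is_primitive_poly :: "complex \<Rightarrow> int poly \<Rightarrow> bool" where
  "is_primitive_poly \<alpha> p \<longleftrightarrow>
     p \<noteq> 0 \<and> poly (map_poly of_int p) \<alpha> = 0 \<and>
     (\<forall>q. q \<noteq> 0 \<and> poly (map_poly of_int q) \<alpha> = 0 \<longrightarrow>
        degree p \<le> degree q \<and>
        (degree q = degree p \<longrightarrow> \<bar>lead_coeff p\<bar> \<le> \<bar>lead_coeff q\<bar>))"

text \<open>Containment graph G(A,B.B) for the chosen representations rep a = (b1,b2):
  vertices are Inl b (first copy of B) and Inr b (second copy of B);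
  edges are {Inl b1, Inr b2} for a = b1 b2.\<close>
definition containment_adj ::
  "complex set \<Rightarrow> (complex \<Rightarrow> complex \<times> complex) \<Rightarrow> complex + complex \<Rightarrow> complex + complex \<Rightarrow> bool" where
  "containment_adj A rep x y \<longleftrightarrow>
     (\<exists>a\<in>A. (x = Inl (fst (rep a)) \<and> y = Inr (snd (rep a))) \<or>
            (y = Inl (fst (rep a)) \<and> x = Inr (snd (rep a))))"

definition has_cycle_of_length :: "('v \<Rightarrow> 'v \<Rightarrow> bool) \<Rightarrow> nat \<Rightarrow> bool" where
  "has_cycle_of_length adj m \<longleftrightarrow>
     3 \<le> m \<and> (\<exists>w :: nat \<Rightarrow> 'v. inj_on w {..<m} \<and> (\<forall>i<m. adj (w i) (w (Suc i mod m))))"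

end

theory Submission
  imports Defs "Berlekamp_Zassenhaus.Factor_Bound"
begin

lemma factor_coeff_bound:
  fixes f g :: "int poly"
  assumes "f \<noteq> 0" "g dvd f"
  shows "real_of_int \<bar>Polynomial.coeff g i\<bar> \<le> 2 ^ degree g * l2norm_complex (map_poly of_int f)"
proof -
  have "real_of_int \<bar>Polynomial.coeff g i\<bar> \<le> real (degree g choose i) * mahler_measure g"
    by (rule Mignotte_bound)
  also have "\<dots> \<le> 2 ^ degree g * mahler_measure f"
  proof (rule mult_mono)
    show "real (degree g choose i) \<le> 2 ^ degree g"
      proof -
      have "real (degree g choose i) \<le> real (2 ^ degree g)"
        using binomial_le_pow2[of "degree g" i] by (simp only: of_nat_le_iff)
      thus ?thesis by simp
    qed
    show "mahler_measure g \<le> mahler_measure f" by (rule mahler_measure_dvd[OF assms])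
  qed (auto simp: mahler_measure_ge_0)
  also have "mahler_measure f \<le> l2norm_complex (map_poly of_int f)"
    unfolding mahler_measure_def by (rule Landau_inequality)
  finally show ?thesis by simp
qed

lemma prim_exists:
  fixes Q :: "int poly" and r :: complex
  assumes Q0: "Q \<noteq> 0" and Qr: "poly (map_poly of_int Q) r = 0"
  shows "\<exists>p. is_primitive_poly r p \<and> p dvd Q"
proof -
  define V where "V q \<longleftrightarrow> q \<noteq> 0 \<and> poly (map_poly of_int q) r = (0::complex)" for q :: "int poly"
  have "\<exists>d. \<exists>q. V q \<and> degree q = d" using assms by (auto simp: V_def)
  from exists_least_iff[THEN iffD1, OF this] obtain d where
    d: "\<exists>q. V q \<and> degree q = d" and dmin: "\<And>d'. d' < d \<Longrightarrow> \<not>(\<exists>q. V q \<and> degree q = d')"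
    by blast
  from d have "\<exists>L q. V q \<and> degree q = d \<and> nat \<bar>lead_coeff q\<bar> = L" by blast
  from exists_least_iff[THEN iffD1, OF this] obtain L where
    L: "\<exists>q. V q \<and> degree q = d \<and> nat \<bar>lead_coeff q\<bar> = L" and
    Lmin: "\<And>L'. L' < L \<Longrightarrow> \<not>(\<exists>q. V q \<and> degree q = d \<and> nat \<bar>lead_coeff q\<bar> = L')"
    by blast
  from L obtain p where p: "V p" "degree p = d" "nat \<bar>lead_coeff p\<bar> = L" by blast
  have dle: "degree p \<le> degree q" if "V q" for q using dmin[of "degree q"] that p by force
  have prim: "is_primitive_poly r p"
    unfolding is_primitive_poly_def
  proof (intro conjI allI impI)
    show "p \<noteq> 0" "poly (map_poly of_int p) r = 0" using p by (auto simp: V_def)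
    fix q assume q: "q \<noteq> 0 \<and> poly (map_poly of_int q) r = 0"
    hence Vq: "V q" by (simp add: V_def)
    show "degree p \<le> degree q" by (rule dle[OF Vq])
    assume "degree q = degree p"
    with Lmin[of "nat \<bar>lead_coeff q\<bar>"] Vq p show "\<bar>lead_coeff p\<bar> \<le> \<bar>lead_coeff q\<bar>" by force
  qed
  have cont: "content p = 1"
  proof (rule ccontr)
    assume c1: "content p \<noteq> 1"
    have p0: "p \<noteq> 0" using p by (simp add: V_def)
    have cpos: "content p > 0" using p0 content_eq_zero_iff[of p]
      by (metis content_ge_0_int order_le_less)
    hence c2: "content p \<ge> 2" using c1 by linarith
    define pp where "pp = primitive_part p"
    have ppe: "p = Polynomial.smult (content p) pp" unfolding pp_def by simp
    have pp0: "pp \<noteq> 0" using p0 ppe by auto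
    have "poly (map_poly of_int p) r = of_int (content p) * poly (map_poly of_int pp) r"
      by (subst ppe) (simp add: hom_distribs)
    hence ppr: "poly (map_poly of_int pp) r = 0" using p cpos by (auto simp: V_def)
    have Vpp: "V pp" using pp0 ppr by (simp add: V_def)
    have dpp: "degree pp = d" using p unfolding pp_def by simp
    have "lead_coeff p = content p * lead_coeff pp" using lead_coeff_smult[of "content p" pp] ppe by metis
    hence "\<bar>lead_coeff p\<bar> = content p * \<bar>lead_coeff pp\<bar>" using cpos by (simp add: abs_mult)
    moreover have "\<bar>lead_coeff pp\<bar> \<ge> 1" using pp0 by (simp add: int_one_le_iff_zero_less)
    moreover have "1 * \<bar>lead_coeff pp\<bar> < content p * \<bar>lead_coeff pp\<bar>"
      using c2 \<open>\<bar>lead_coeff pp\<bar> \<ge> 1\<close> by (intro mult_strict_right_mono) auto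
    ultimately have "\<bar>lead_coeff pp\<bar> < \<bar>lead_coeff p\<bar>" by simp
    hence "nat \<bar>lead_coeff pp\<bar> < L" using p by linarith
    with Lmin Vpp dpp show False by blast
  qed
  have pdvd: "p dvd Q"
  proof -
    define t where "t = pseudo_mod Q p"
    have p0: "p \<noteq> 0" using p by (simp add: V_def)
    from pseudo_mod[OF p0, of Q, folded t_def] obtain a q where
      a: "a \<noteq> 0" "Polynomial.smult a Q = p * q + t" and tdeg: "t = 0 \<or> degree t < degree p" by blast
    have "poly (map_poly of_int (Polynomial.smult a Q)) r = of_int a * poly (map_poly of_int Q) r"
      by (simp add: hom_distribs)
    also have "\<dots> = 0" using Qr by simp
    finally have "poly (map_poly of_int (p * q + t)) r = 0" using a by simp
    moreover have "poly (map_poly of_int p) r = 0" using p by (simp add: V_def)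
    ultimately have tr: "poly (map_poly of_int t) r = 0" by (simp add: hom_distribs)
    have "t = 0"
    proof (rule ccontr)
      assume "t \<noteq> 0"
      hence "V t" using tr by (simp add: V_def)
      hence "degree p \<le> degree t" by (rule dle)
      with tdeg \<open>t \<noteq> 0\<close> show False by simp
    qed
    hence "p dvd Polynomial.smult a Q" using a by simp
    from dvd_smult_int[OF a(1) this] show ?thesis using cont by (simp add: primitive_part_prim)
  qed
  show ?thesis using prim pdvd by blast
qed


lemma cyc_arith: "i < m \<Longrightarrow> j < m \<Longrightarrow> 4 \<le> m \<Longrightarrow> j = Suc i mod m \<Longrightarrow> i = Suc j mod m \<Longrightarrow> False"
proof -
  assume a: "i < m" "j < m" "4 \<le> m" "j = Suc i mod m" "i = Suc j mod m"
  show False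
  proof (cases "Suc i = m")
    case True
    have "j = 0" using a(4) True by (metis mod_self)
    have "i = Suc 0 mod m" using a(5) \<open>j = 0\<close> by simp
    also have "\<dots> = Suc 0" using a(3) by (intro mod_less) linarith
    finally have "i = 1" by simp
    thus False using True a(3) by linarith
  next
    case False
    hence si: "Suc i < m" using a(1) by linarith
    hence j: "j = Suc i" using a(4) by (metis mod_less)
    show False
    proof (cases "Suc (Suc i) = m")
      case True
      hence "i = 0" using a(5) j by (metis mod_self)
      thus False using True a(3) by linarith
    next
      case False
      hence "Suc (Suc i) < m" using si by linarith
      hence "i = Suc (Suc i)" using a(5) j by (metis mod_less)
      thus False by linarith
    qed
  qed
qed

lemma prod_rot: "0 < k \<Longrightarrow> (\<Prod>j<k. g (Suc j mod k)) = (\<Prod>j<k. (g j :: 'a :: comm_monoid_mult))"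
proof -
  assume "0 < k"
  then obtain k' where k: "k = Suc k'" by (cases k) auto
  have "(\<Prod>j<Suc k'. g (Suc j mod Suc k')) = (\<Prod>j<k'. g (Suc j mod Suc k')) * g 0"
    by (simp add: prod.lessThan_Suc)
  also have "(\<Prod>j<k'. g (Suc j mod Suc k')) = (\<Prod>j<k'. g (Suc j))"
    by (rule prod.cong) auto
  also have "(\<Prod>j<k'. g (Suc j)) * g 0 = (\<Prod>j<Suc k'. g j)"
    by (metis prod.lessThan_Suc_shift mult.commute)
  finally show ?thesis using k by simp
qed


lemma prod_pairs: fixes k :: nat and g :: "nat \<Rightarrow> 'a :: comm_monoid_mult" shows "(\<Prod>j<k. g (2*j) * g (2*j+1)) = (\<Prod>i<2*k. (g i :: 'a :: comm_monoid_mult))"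
  by (induction k) (simp_all add: prod.lessThan_Suc mult.assoc)


lemma lin_prod_coeff:
  fixes c :: "nat \<Rightarrow> nat" and S :: "nat set"
  assumes "finite S"
  shows "\<forall>i. 0 \<le> Polynomial.coeff (\<Prod>j\<in>S. [:int (c j), 1:]) i"
  using assms
proof (induction S rule: finite_induct)
  case empty
  then show ?case by (simp add: coeff_1)
next
  case (insert x F)
  show ?case
  proof
    fix i
    show "0 \<le> Polynomial.coeff (\<Prod>j\<in>insert x F. [:int (c j), 1:]) i"
      using insert by (auto simp: coeff_pCons split: nat.split)
  qed
qed

lemma lin_prod_coeff_le:
  fixes c :: "nat \<Rightarrow> nat" and S :: "nat set"
  assumes "finite S"
  shows "Polynomial.coeff (\<Prod>j\<in>S. [:int (c j), 1:]) i \<le> (\<Prod>j\<in>S. 1 + int (c j))"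
proof -
  let ?P = "\<Prod>j\<in>S. [:int (c j), 1:]"
  have nn: "\<And>i. 0 \<le> Polynomial.coeff ?P i" using lin_prod_coeff[OF assms] by blast
  have pv: "poly ?P 1 = (\<Prod>j\<in>S. 1 + int (c j))" by (simp add: poly_prod add.commute)
  show ?thesis
  proof (cases "i \<le> degree ?P")
    case True
    have "Polynomial.coeff ?P i = Polynomial.coeff ?P i * 1 ^ i" by simp
    also have "\<dots> \<le> (\<Sum>j\<le>degree ?P. Polynomial.coeff ?P j * 1 ^ j)"
      by (rule member_le_sum[of i "{..degree ?P}" "\<lambda>j. Polynomial.coeff ?P j * 1 ^ j"]) (use True nn in auto)
    also have "\<dots> = poly ?P 1" by (simp add: poly_altdef)
    finally show ?thesis using pv by simp
  next
    case False
    hence "Polynomial.coeff ?P i = 0" by (simp add: coeff_eq_0)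
    moreover have "0 \<le> (\<Prod>j\<in>S. 1 + int (c j))" by (rule prod_nonneg) auto
    ultimately show ?thesis by simp
  qed
qed


lemma l2_bound:
  fixes q :: "int poly" and M :: real
  assumes "\<And>i. real_of_int \<bar>Polynomial.coeff q i\<bar> \<le> M" "0 \<le> M"
  shows "l2norm_complex (map_poly (of_int :: int \<Rightarrow> complex) q) \<le> sqrt (real (degree q + 1)) * M"
proof (cases "q = 0")
  case True
  then show ?thesis using assms by simp
next
  case False
  let ?q = "map_poly (of_int :: int \<Rightarrow> complex) q"
  have q0: "?q \<noteq> 0" using False by simp
  have dq: "degree ?q = degree q" by simp
  have "norm2 ?q = (\<Sum>i\<leftarrow>[0..<Suc (degree q)]. (cmod (of_int (Polynomial.coeff q i)))\<^sup>2)"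
    using q0 unfolding coeffs_def dq by (simp add: o_def coeff_map_poly)
  also have "\<dots> = (\<Sum>i<Suc (degree q). (cmod (of_int (Polynomial.coeff q i) :: complex))\<^sup>2)"
    by (simp add: sum_list_distinct_conv_sum_set atLeast0LessThan)
  also have "\<dots> \<le> (\<Sum>i<Suc (degree q). M\<^sup>2)"
  proof (rule sum_mono)
    fix i
    have "cmod (of_int (Polynomial.coeff q i) :: complex) = real_of_int \<bar>Polynomial.coeff q i\<bar>"
      by (simp only: norm_of_int of_int_abs)
    thus "(cmod (of_int (Polynomial.coeff q i) :: complex))\<^sup>2 \<le> M\<^sup>2"
    proof -
      have "\<bar>real_of_int (Polynomial.coeff q i)\<bar> \<le> M" using assms(1)[of i] by simp
      hence "\<bar>real_of_int (Polynomial.coeff q i)\<bar>^2 \<le> M^2" by (rule power_mono) simp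
      thus ?thesis by simp
    qed
  qed
  also have "\<dots> = real (degree q + 1) * M\<^sup>2" by simp
  finally have "l2norm_complex ?q \<le> sqrt (real (degree q + 1) * M\<^sup>2)" by (rule real_sqrt_le_mono)
  also have "\<dots> = sqrt (real (degree q + 1)) * M" using assms(2) by (simp add: real_sqrt_mult)
  finally show ?thesis .
qed





theorem lemma3:
  fixes k :: nat
  assumes "0 < k"
  shows "\<exists>C::real. C > 0 \<and>
    (\<forall>(r::complex) (N::nat) (B::complex set) (rep::complex \<Rightarrow> complex \<times> complex).
       let A = {r + of_nat i | i. i < N} in
       0 < N \<longrightarrow> finite B \<longrightarrow>
       A \<subseteq> {b * b' | b b'. b \<in> B \<and> b' \<in> B} \<longrightarrow>
       (\<forall>a\<in>A. fst (rep a) \<in> B \<and> snd (rep a) \<in> B \<and> fst (rep a) * snd (rep a) = a) \<longrightarrow>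
       has_cycle_of_length (containment_adj A rep) (2 * k) \<longrightarrow>
       (\<exists>p. is_primitive_poly r p \<and> degree p \<le> k \<and>
            real_of_int (int_poly_height p) \<le> C * real N ^ k))"
proof -
  define C :: real where "C = 2 ^ k * (real k + 1)"
  have C0: "C > 0" unfolding C_def by simp
  show ?thesis
  proof (rule exI[of _ C], intro conjI allI, fact C0, unfold Let_def, intro impI)
    fix r :: complex and N :: nat and B :: "complex set" and rep :: "complex \<Rightarrow> complex \<times> complex"
    define A where "A = {r + of_nat i | i. i < N}"
    assume N0: "0 < N" and repA: "\<forall>a\<in>{r + of_nat i | i. i < N}. fst (rep a) \<in> B \<and> snd (rep a) \<in> B \<and> fst (rep a) * snd (rep a) = a"
      and cyc: "has_cycle_of_length (containment_adj {r + of_nat i | i. i < N} rep) (2 * k)"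
    define m where "m = 2 * k"
    from cyc obtain w :: "nat \<Rightarrow> complex + complex" where m3: "3 \<le> m" and winj: "inj_on w {..<m}"
      and wadj: "\<And>i. i < m \<Longrightarrow> containment_adj A rep (w i) (w (Suc i mod m))"
      unfolding has_cycle_of_length_def m_def A_def by blast
    have m4: "4 \<le> m" using m3 unfolding m_def by presburger
    have wi: "\<And>i j. i < m \<Longrightarrow> j < m \<Longrightarrow> w i = w j \<Longrightarrow> i = j" using winj by (auto simp: inj_on_def)
    have smod: "\<And>i. Suc i mod m < m" using m4 by simp
    define E where "E i x \<longleftrightarrow> x \<in> A \<and> ((w i = Inl (fst (rep x)) \<and> w (Suc i mod m) = Inr (snd (rep x))) \<or>
         (w (Suc i mod m) = Inl (fst (rep x)) \<and> w i = Inr (snd (rep x))))" for i x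
    define a where "a i = (SOME x. E i x)" for i
    have aE: "E i (a i)" if "i < m" for i
    proof -
      have "\<exists>x. E i x" using wadj[OF that] unfolding containment_adj_def E_def by blast
      thus ?thesis unfolding a_def by (rule someI_ex)
    qed
    define val :: "complex + complex \<Rightarrow> complex" where "val = case_sum (\<lambda>x. x) (\<lambda>x. x)"
    define b where "b i = val (w i)" for i
    have ab: "a i = b i * b (Suc i mod m)" if "i < m" for i
    proof -
      have "a i \<in> A" using aE[OF that] by (simp add: E_def)
      hence "fst (rep (a i)) * snd (rep (a i)) = a i" using repA by (simp add: A_def)
      thus ?thesis using aE[OF that] unfolding E_def b_def val_def by (auto simp: mult.commute)
    qed
    have ainj: "i = j" if "i < m" "j < m" "a i = a j" for i j
    proof -
      let ?x = "fst (rep (a i))" and ?y = "snd (rep (a i))"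
      have Ei: "(w i = Inl ?x \<and> w (Suc i mod m) = Inr ?y) \<or> (w (Suc i mod m) = Inl ?x \<and> w i = Inr ?y)"
        using aE[OF that(1)] unfolding E_def by blast
      have Ej: "(w j = Inl ?x \<and> w (Suc j mod m) = Inr ?y) \<or> (w (Suc j mod m) = Inl ?x \<and> w j = Inr ?y)"
        using aE[OF that(2)] that(3) unfolding E_def by simp
      have si: "Suc i mod m < m" "Suc j mod m < m" by (rule smod)+
      from Ei show ?thesis
      proof
        assume h: "w i = Inl ?x \<and> w (Suc i mod m) = Inr ?y"
        from Ej show ?thesis
        proof
          assume "w j = Inl ?x \<and> w (Suc j mod m) = Inr ?y"
          thus ?thesis using h wi[OF that(1,2)] by simp
        next
          assume h2: "w (Suc j mod m) = Inl ?x \<and> w j = Inr ?y"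
          have 1: "i = Suc j mod m" using h h2 wi[OF that(1) si(2)] by simp
          have 2: "Suc i mod m = j" using h h2 wi[OF si(1) that(2)] by simp
          show ?thesis using cyc_arith[OF that(1,2) m4 2[symmetric] 1] by blast
        qed
      next
        assume h: "w (Suc i mod m) = Inl ?x \<and> w i = Inr ?y"
        from Ej show ?thesis
        proof
          assume "w (Suc j mod m) = Inl ?x \<and> w j = Inr ?y"
          thus ?thesis using h wi[OF that(1,2)] by simp
        next
          assume h2: "w j = Inl ?x \<and> w (Suc j mod m) = Inr ?y"
          have 1: "i = Suc j mod m" using h h2 wi[OF that(1) si(2)] by simp
          have 2: "Suc i mod m = j" using h h2 wi[OF si(1) that(2)] by simp
          show ?thesis using cyc_arith[OF that(1,2) m4 2[symmetric] 1] by blast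
        qed
      qed
    qed
    define n where "n i = (SOME t. t < N \<and> a i = r + of_nat t)" for i
    have n: "n i < N \<and> a i = r + of_nat (n i)" if "i < m" for i
    proof -
      have "a i \<in> A" using aE[OF that] by (simp add: E_def)
      hence "\<exists>t. t < N \<and> a i = r + of_nat t" by (auto simp: A_def)
      thus ?thesis unfolding n_def by (rule someI_ex)
    qed
    have ninj: "i = j" if "i < m" "j < m" "n i = n j" for i j
      using ainj[OF that(1,2)] n[OF that(1)] n[OF that(2)] that(3) by simp
    have ev: "\<And>j. j < k \<Longrightarrow> 2 * j < m" "\<And>j. j < k \<Longrightarrow> 2 * j + 1 < m" unfolding m_def by auto
    have prodeq: "(\<Prod>j<k. a (2*j)) = (\<Prod>j<k. a (2*j+1))"
    proof -
      have "(\<Prod>j<k. a (2*j)) = (\<Prod>j<k. b (2*j) * b (2*j+1))"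
        by (rule prod.cong) (use ev ab m_def in auto)
      also have "\<dots> = (\<Prod>i<2*k. b i)" by (rule prod_pairs)
      finally have e: "(\<Prod>j<k. a (2*j)) = (\<Prod>i<2*k. b i)" .
      have "(\<Prod>j<k. a (2*j+1)) = (\<Prod>j<k. b (2*j+1) * b (2 * (Suc j mod k)))"
      proof (rule prod.cong)
        fix j assume "j \<in> {..<k}"
        hence "a (2*j+1) = b (2*j+1) * b (Suc (2*j+1) mod m)" using ab ev by auto
        moreover have "Suc (2*j+1) mod m = 2 * (Suc j mod k)"
          unfolding m_def by (simp add: mod_mult_mult1[symmetric])
        ultimately show "a (2*j+1) = b (2*j+1) * b (2 * (Suc j mod k))" by simp
      qed simp
      also have "\<dots> = (\<Prod>j<k. b (2*j+1)) * (\<Prod>j<k. b (2 * (Suc j mod k)))"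
        by (simp add: prod.distrib)
      also have "(\<Prod>j<k. b (2 * (Suc j mod k))) = (\<Prod>j<k. b (2 * j))"
        using prod_rot[OF assms, of "\<lambda>j. b (2*j)"] by simp
      also have "(\<Prod>j<k. b (2*j+1)) * (\<Prod>j<k. b (2 * j)) = (\<Prod>j<k. b (2*j) * b (2*j+1))"
        by (simp add: prod.distrib mult.commute)
      also have "\<dots> = (\<Prod>i<2*k. b i)" by (rule prod_pairs)
      finally show ?thesis using e by simp
    qed
    define Pe :: "int poly" where "Pe = (\<Prod>j<k. [:int (n (2*j)), 1:])"
    define Po :: "int poly" where "Po = (\<Prod>j<k. [:int (n (2*j+1)), 1:])"
    define Q where "Q = Pe - Po"
    have pev: "poly (map_poly of_int [:int (n i), 1:]) x = x + of_nat (n i)" for i and x :: complex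
      by simp
    have Pe_r: "poly (map_poly of_int Pe) r = (\<Prod>j<k. a (2*j))"
      unfolding Pe_def by (simp add: hom_distribs poly_prod n ev add.commute)
    have Po_r: "poly (map_poly of_int Po) r = (\<Prod>j<k. a (2*j+1))"
    proof -
      have "poly (map_poly of_int Po) r = (\<Prod>j<k. r + of_nat (n (2*j+1)))"
        unfolding Po_def by (simp add: hom_distribs poly_prod add.commute)
      also have "\<dots> = (\<Prod>j<k. a (2*j+1))"
        by (rule prod.cong) (use n ev in auto)
      finally show ?thesis .
    qed
    have Qr: "poly (map_poly of_int Q) r = 0"
      unfolding Q_def using Pe_r Po_r prodeq by (simp add: hom_distribs)
    have Q0: "Q \<noteq> 0"
    proof
      assume "Q = 0"
      hence "poly Pe (- int (n 0)) = poly Po (- int (n 0))" unfolding Q_def by simp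
      moreover have "poly Pe (- int (n 0)) = 0"
        unfolding Pe_def poly_prod using assms by (auto intro!: bexI[of _ 0])
      moreover have "poly Po (- int (n 0)) \<noteq> 0"
        unfolding Po_def poly_prod
      proof -
        have "\<forall>j\<in>{..<k}. poly [:int (n (2*j+1)), 1:] (- int (n 0)) \<noteq> 0"
        proof
          fix j assume "j \<in> {..<k}"
          hence "n (2*j+1) \<noteq> n 0" using ninj[of "2*j+1" 0] ev m4 by auto
          thus "poly [:int (n (2*j+1)), 1:] (- int (n 0)) \<noteq> 0" by simp
        qed
        thus "(\<Prod>j<k. poly [:int (n (2*j+1)), 1:] (- int (n 0))) \<noteq> 0"
          by (subst prod_zero_iff) auto
      qed
      ultimately show False by simp
    qed
    have degQ: "degree Q \<le> k"
    proof -
      have "degree Pe \<le> k" unfolding Pe_def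
        using degree_prod_sum_le[of "{..<k}" "\<lambda>j. [:int (n (2*j)), 1:]"] by simp
      moreover have "degree Po \<le> k" unfolding Po_def
        using degree_prod_sum_le[of "{..<k}" "\<lambda>j. [:int (n (2*j+1)), 1:]"] by simp
      ultimately show ?thesis unfolding Q_def using degree_diff_le by blast
    qed
    have cQ: "real_of_int \<bar>Polynomial.coeff Q i\<bar> \<le> real N ^ k" for i
    proof -
      have bnd: "(\<Prod>j\<in>{..<k}. 1 + int (c j)) \<le> int N ^ k" if "\<And>j. j < k \<Longrightarrow> c j < N" for c
      proof -
        have "(\<Prod>j\<in>{..<k}. 1 + int (c j)) \<le> (\<Prod>j\<in>{..<k}. int N)"
          by (rule prod_mono) (use that in force)
        thus ?thesis by simp
      qed
      have e1: "0 \<le> Polynomial.coeff Pe i" "Polynomial.coeff Pe i \<le> int N ^ k"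
        unfolding Pe_def using lin_prod_coeff[of "{..<k}" "\<lambda>j. n (2*j)"]
          lin_prod_coeff_le[of "{..<k}" "\<lambda>j. n (2*j)" i] bnd[of "\<lambda>j. n (2*j)"] n ev by force+
      have e2: "0 \<le> Polynomial.coeff Po i" "Polynomial.coeff Po i \<le> int N ^ k"
        unfolding Po_def using lin_prod_coeff[of "{..<k}" "\<lambda>j. n (2*j+1)"]
          lin_prod_coeff_le[of "{..<k}" "\<lambda>j. n (2*j+1)" i] bnd[of "\<lambda>j. n (2*j+1)"] n ev by force+
      have "\<bar>Polynomial.coeff Q i\<bar> \<le> int N ^ k" unfolding Q_def using e1 e2 by simp
      hence "real_of_int \<bar>Polynomial.coeff Q i\<bar> \<le> real_of_int (int N ^ k)" by (simp only: of_int_le_iff)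
      thus ?thesis by simp
    qed
    from prim_exists[OF Q0 Qr] obtain p where pp: "is_primitive_poly r p" and pdvd: "p dvd Q" by blast
    have p0: "p \<noteq> 0" using pp by (simp add: is_primitive_poly_def)
    have degp: "degree p \<le> k"
      using pp Q0 Qr degQ unfolding is_primitive_poly_def by force
    have cp: "real_of_int \<bar>Polynomial.coeff p i\<bar> \<le> C * real N ^ k" for i
    proof -
      have "real_of_int \<bar>Polynomial.coeff p i\<bar> \<le> 2 ^ degree p * l2norm_complex (map_poly of_int Q)"
        by (rule factor_coeff_bound[OF Q0 pdvd])
      also have "\<dots> \<le> 2 ^ k * (sqrt (real (degree Q + 1)) * real N ^ k)"
      proof (rule mult_mono)
        show "(2::real) ^ degree p \<le> 2 ^ k" using degp by (intro power_increasing) auto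
        show "l2norm_complex (map_poly of_int Q) \<le> sqrt (real (degree Q + 1)) * real N ^ k"
          by (rule l2_bound[OF cQ]) simp
        show "0 \<le> l2norm_complex (map_poly (of_int :: int \<Rightarrow> complex) Q)"
          by (intro real_sqrt_ge_zero sum_list_nonneg) auto
      qed simp
      also have "sqrt (real (degree Q + 1)) \<le> real k + 1"
      proof -
        have "sqrt (real (degree Q + 1)) \<le> sqrt ((real k + 1)^2)"
        proof (rule real_sqrt_le_mono)
          have "real (degree Q + 1) \<le> real k + 1" using degQ by simp
          also have "\<dots> \<le> (real k + 1)^2" by (rule self_le_power) auto
          finally show "real (degree Q + 1) \<le> (real k + 1)^2" .
        qed
        thus ?thesis by simp
      qed
      hence "2 ^ k * (sqrt (real (degree Q + 1)) * real N ^ k) \<le> 2 ^ k * ((real k + 1) * real N ^ k)"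
        by (intro mult_left_mono mult_right_mono) auto
      also have "\<dots> = C * real N ^ k" unfolding C_def by simp
      finally show ?thesis .
    qed
    have "real_of_int (int_poly_height p) \<le> C * real N ^ k"
    proof -
      let ?S = "{\<bar>Polynomial.coeff p i\<bar> | i. i \<le> degree p}"
      have "finite ?S" by (rule finite_image_set) simp
      moreover have "?S \<noteq> {}" by blast
      ultimately have "Max ?S \<in> ?S" by (rule Max_in)
      then obtain i where "Max ?S = \<bar>Polynomial.coeff p i\<bar>" by blast
      thus ?thesis unfolding int_poly_height_def using cp[of i] by simp
    qed
    thus "\<exists>p. is_primitive_poly r p \<and> degree p \<le> k \<and> real_of_int (int_poly_height p) \<le> C * real N ^ k"
      using pp degp by blast
  qed
qed

end
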